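(* For every positive integer $k$ and every integer $A\ge0$, \[\mathcal{R}_{k,(k+1)^2}\big(Ak(k+1)\big)=\mathcal{R}_{k+1,k(k+1)}\big(Ak(k+1)\big)=\tfrac12 kA(A+1)+(A+1).\]
   Context: For $a,b>0$ and $t\ge0$, let $\Delta_{a,b}(t)\subset\mathbb{R}^2$ be the closed right triangle with vertices $(0,0)$, $(t/a,0)$ and $(0,t/b)$, and let $\mathcal{R}_{a,b}(t)=\#\big(\Delta_{a,b}(t)\cap\mathbb{Z}_{\ge0}^2\big)$ be the number of lattice points it contains. *)

theory Defs
  imports "HOL-Analysis.Analysis"
begin

definition triangle :: "real \<Rightarrow> real \<Rightarrow> real \<Rightarrow> (real \<times> real) set" where
  "triangle a b t = convex hull {(0,0), (t/a, 0), (0, t/b)}"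

definition R :: "real \<Rightarrow> real \<Rightarrow> real \<Rightarrow> nat" where
  "R a b t = card {(x::nat, y::nat). (real x, real y) \<in> triangle a b t}"

end

theory Submission
  imports Defs
begin
lemma tri:
  assumes a: "a > 0" and b: "b > 0" and t: "t \<ge> 0"
  shows "(x,y) \<in> triangle a b t \<longleftrightarrow> x \<ge> 0 \<and> y \<ge> 0 \<and> a*x + b*y \<le> t"
proof
  assume "(x,y) \<in> triangle a b t"
  then obtain u v where uv: "0 \<le> u" "0 \<le> v" "u + v \<le> 1"
     and e: "(x,y) = (u * (t/a), v * (t/b))"
    unfolding triangle_def convex_hull_3_alt by auto
  hence x: "x = u * (t / a)" and y: "y = v * (t / b)" by auto
  have "a*x + b*y = (u+v)*t" using a b by (simp add: x y field_simps)
  also have "\<dots> \<le> t" using uv t by (simp add: mult_left_le_one_le)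
  finally show "x \<ge> 0 \<and> y \<ge> 0 \<and> a*x + b*y \<le> t" using x y uv a b t by simp
next
  assume h: "x \<ge> 0 \<and> y \<ge> 0 \<and> a*x + b*y \<le> t"
  show "(x,y) \<in> triangle a b t"
  proof (cases "t = 0")
    case True
    have "a*x \<ge> 0" "b*y \<ge> 0" using h a b by auto
    hence "a*x = 0" "b*y = 0" using h True by linarith+
    hence "x = 0" "y = 0" using a b by auto
    thus ?thesis unfolding triangle_def by (simp add: hull_inc)
  next
    case False
    hence tp: "t > 0" using t by simp
    have "(x,y) = (0,0) + (a*x/t) *\<^sub>R ((t/a,0) - (0,0)) + (b*y/t) *\<^sub>R ((0,t/b) - (0,0))"
      using a b tp by simp
    moreover have "0 \<le> a*x/t" "0 \<le> b*y/t" "a*x/t + b*y/t \<le> 1"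
      using a b tp h by (auto simp: add_divide_distrib[symmetric])
    ultimately show ?thesis unfolding triangle_def convex_hull_3_alt by blast
  qed
qed

lemma Rcard: "a > 0 \<Longrightarrow> b > 0 \<Longrightarrow> t \<ge> 0 \<Longrightarrow>
  R a b t = card {(x::nat, y::nat). a * real x + b * real y \<le> t}"
  unfolding R_def using tri by simp

definition phi :: "nat \<Rightarrow> nat \<times> nat \<Rightarrow> nat \<times> nat" where
  "phi k = (\<lambda>(x', y'). ((k+1)*y' + x' mod (k+1), x' div (k+1)))"

lemma key: "k * ((k+1)*y' + x' mod (k+1)) + (k+1)^2 * (x' div (k+1)) + x' mod (k+1) = (k+1)*(x' + k*y')"
  for k x' y' :: nat
proof -
  define q where "q = x' div (k+1)"
  define r where "r = x' mod (k+1)"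
  have "x' = (k+1) * q + r" unfolding q_def r_def by (metis div_mult_mod_eq mult.commute)
  then show ?thesis unfolding q_def[symmetric] r_def[symmetric] by (simp add: algebra_simps power2_eq_square)
qed

lemma cond: "k * ((k+1)*y' + x' mod (k+1)) + (k+1)^2 * (x' div (k+1)) \<le> A*k*(k+1) \<longleftrightarrow> x' + k*y' \<le> A*k"
  for k x' y' A :: nat
proof -
  define S where "S = k * ((k+1)*y' + x' mod (k+1)) + (k+1)^2 * (x' div (k+1))"
  define r where "r = x' mod (k+1)"
  have e: "S + r = (k+1)*(x' + k*y')" unfolding S_def r_def by (rule key)
  have rk: "r \<le> k" unfolding r_def
    using less_Suc_eq_le mod_less_divisor by auto
  show ?thesis unfolding S_def[symmetric]
  proof
    assume "S \<le> A*k*(k+1)"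
    hence "(k+1)*(x' + k*y') < (k+1)*(A*k+1)" using e rk by (simp add: algebra_simps)
    hence "x' + k*y' < A*k+1" by (meson mult_less_cancel1)
    thus "x' + k*y' \<le> A*k" by simp
  next
    assume "x' + k*y' \<le> A*k"
    hence "(k+1)*(x' + k*y') \<le> (k+1)*(A*k)" by (rule mult_le_mono2)
    thus "S \<le> A*k*(k+1)" using e by (simp add: algebra_simps)
  qed
qed

lemma dm: "r < m \<Longrightarrow> (m*b + r) div m = b \<and> (m*b + r) mod m = r" for m b r :: nat
  by (metis add.commute div_mult_self2 div_less mod_mult_self2 mod_less mult.commute not_less0 div_0 mult_0 add_0 neq0_conv)

lemma phi_bij: "bij_betw (phi k) {(x,y). x + k*y \<le> A*k} {(x,y). k*x + (k+1)^2*y \<le> A*k*(k+1)}"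
proof (rule bij_betw_byWitness[where f' = "\<lambda>(x,y). ((k+1)*y + x mod (k+1), x div (k+1))"])
  show "\<forall>a\<in>{(x, y). x + k * y \<le> A * k}. (\<lambda>(x,y). ((k+1)*y + x mod (k+1), x div (k+1))) (phi k a) = a"
    using dm[of "x mod (k+1)" "k+1" for x] by (auto simp: phi_def simp del: add_Suc_right Suc_eq_plus1 mod_Suc)
  have inv: "phi k ((\<lambda>(x,y). ((k+1)*y + x mod (k+1), x div (k+1))) a) = a" for a
  proof (cases a)
    case (Pair x y)
    have m: "(k+1)*(x div (k+1)) + x mod (k+1) = x" by (metis div_mult_mod_eq mult.commute)
    have d: "((k+1)*y + x mod (k+1)) div (k+1) = y \<and> ((k+1)*y + x mod (k+1)) mod (k+1) = x mod (k+1)"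
      by (rule dm) simp
    show ?thesis unfolding Pair phi_def using m d by (simp only: case_prod_conv)
  qed
  thus "\<forall>a\<in>{(x, y). k*x + (k+1)^2*y \<le> A*k*(k+1)}. phi k ((\<lambda>(x,y). ((k+1)*y + x mod (k+1), x div (k+1))) a) = a"
    by blast
  show "phi k ` {(x, y). x + k * y \<le> A * k} \<subseteq> {(x, y). k * x + (k + 1)\<^sup>2 * y \<le> A * k * (k + 1)}"
    using cond by (auto simp: phi_def)
  show "(\<lambda>(x,y). ((k+1)*y + x mod (k+1), x div (k+1))) ` {(x, y). k * x + (k + 1)\<^sup>2 * y \<le> A * k * (k + 1)} \<subseteq> {(x, y). x + k * y \<le> A * k}"
  proof
    fix p assume "p \<in> (\<lambda>(x,y). ((k+1)*y + x mod (k+1), x div (k+1))) ` {(x, y). k * x + (k + 1)\<^sup>2 * y \<le> A * k * (k + 1)}"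
    then obtain a where a: "a \<in> {(x, y). k * x + (k + 1)\<^sup>2 * y \<le> A * k * (k + 1)}"
      and p: "p = (\<lambda>(x,y). ((k+1)*y + x mod (k+1), x div (k+1))) a" by blast
    have "phi k p \<in> {(x, y). k * x + (k + 1)\<^sup>2 * y \<le> A * k * (k + 1)}" using a p inv by simp
    thus "p \<in> {(x, y). x + k * y \<le> A * k}" using cond by (cases p) (auto simp: phi_def)
  qed
qed

lemma card2:
  assumes k: "k \<ge> 1"
  shows "2 * card {(x::nat,y::nat). x + k*y \<le> A*k} = k*A*(A+1) + 2*(A+1)"
proof (induction A)
  case 0
  have "{(x::nat,y::nat). x + k*y \<le> 0*k} = {(0,0)}" using k by auto
  thus ?case by simp
next
  case (Suc A)
  let ?S = "\<lambda>A. {(x::nat,y::nat). x + k*y \<le> A*k}"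
  have fin: "finite (?S A)"
  proof (rule finite_subset)
    show "?S A \<subseteq> {..A*k} \<times> {..A}"
    proof
      fix p assume "p \<in> ?S A"
      then obtain x y where p: "p = (x,y)" "x + k*y \<le> A*k" by blast
      have "k*y \<le> k*A" using p(2) by (metis add_leD2 mult.commute)
      hence "y \<le> A" using k by simp
      thus "p \<in> {..A*k} \<times> {..A}" using p by auto
    qed
  qed simp
  have eq: "?S (Suc A) = (\<lambda>(x,y). (x, Suc y)) ` ?S A \<union> (\<lambda>x. (x,0)) ` {..Suc A * k}"
  proof (rule set_eqI)
    fix p :: "nat \<times> nat"
    obtain x y where p: "p = (x,y)" by force
    show "p \<in> ?S (Suc A) \<longleftrightarrow> p \<in> (\<lambda>(x,y). (x, Suc y)) ` ?S A \<union> (\<lambda>x. (x,0)) ` {..Suc A * k}"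
    proof (cases y)
      case 0 thus ?thesis using p by auto
    next
      case (Suc z)
      have "p \<in> (\<lambda>(x,y). (x, Suc y)) ` ?S A \<longleftrightarrow> (x,z) \<in> ?S A" using p Suc by auto
      thus ?thesis using p Suc by auto
    qed
  qed
  have inj: "inj_on (\<lambda>(x::nat,y::nat). (x, Suc y)) (?S A)" by (auto simp: inj_on_def)
  have "card (?S (Suc A)) = card ((\<lambda>(x,y). (x, Suc y)) ` ?S A) + card ((\<lambda>x. (x,0::nat)) ` {..Suc A * k})"
    unfolding eq by (rule card_Un_disjoint) (use fin in auto)
  also have "\<dots> = card (?S A) + (Suc A * k + 1)"
    using card_image[OF inj] by (simp add: card_image inj_on_def)
  finally have "card (?S (Suc A)) = card (?S A) + (Suc A * k + 1)" .
  hence "2 * card (?S (Suc A)) = 2 * card (?S A) + 2 * (Suc A * k + 1)" by simp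
  also have "\<dots> = k*Suc A*(Suc A+1) + 2*(Suc A+1)" using Suc.IH by (simp add: algebra_simps)
  finally show ?case .
qed

theorem mainTheorem15:
  fixes k A :: nat
  assumes "k \<ge> 1"
  shows "R (real k) (real ((k+1)^2)) (real (A*k*(k+1))) = R (real (k+1)) (real (k*(k+1))) (real (A*k*(k+1)))
       \<and> real (R (real (k+1)) (real (k*(k+1))) (real (A*k*(k+1)))) = real k * real A * (real A + 1) / 2 + (real A + 1)"
proof -
  have kp: "real k > 0" using assms by simp
  have s1: "{(x::nat, y::nat). real k * real x + real ((k+1)^2) * real y \<le> real (A*k*(k+1))}
      = {(x,y). k*x + (k+1)^2*y \<le> A*k*(k+1)}"
  proof -
    have "real k * real x + real ((k+1)^2) * real y = real (k*x + (k+1)^2*y)" for x y by simp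
    then show ?thesis by (simp only: of_nat_le_iff)
  qed
  have s2: "{(x::nat, y::nat). real (k+1) * real x + real (k*(k+1)) * real y \<le> real (A*k*(k+1))}
      = {(x,y). x + k*y \<le> A*k}"
  proof -
    have "real (k+1) * real x + real (k*(k+1)) * real y = real ((k+1)*(x + k*y))" for x y
      by (simp add: algebra_simps)
    moreover have "A*k*(k+1) = (k+1)*(A*k)" by simp
    ultimately show ?thesis by (simp only: of_nat_le_iff mult_le_cancel1) simp
  qed
  have R1: "R (real k) (real ((k+1)^2)) (real (A*k*(k+1))) = card {(x,y). k*x + (k+1)^2*y \<le> A*k*(k+1)}"
    using Rcard[of "real k" "real ((k+1)^2)" "real (A*k*(k+1))"] kp s1 by simp
  have R2: "R (real (k+1)) (real (k*(k+1))) (real (A*k*(k+1))) = card {(x::nat,y::nat). x + k*y \<le> A*k}"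
  proof -
    have "R (real (k+1)) (real (k*(k+1))) (real (A*k*(k+1))) = card {(x::nat, y::nat). real (k+1) * real x + real (k*(k+1)) * real y \<le> real (A*k*(k+1))}"
      by (rule Rcard) (use kp in \<open>auto simp: add_pos_pos\<close>)
    thus ?thesis by (simp only: s2)
  qed
  have c: "card {(x,y). k*x + (k+1)^2*y \<le> A*k*(k+1)} = card {(x::nat,y::nat). x + k*y \<le> A*k}"
    using bij_betw_same_card[OF phi_bij] by simp
  have "real (2 * card {(x::nat,y::nat). x + k*y \<le> A*k}) = real (k*A*(A+1) + 2*(A+1))"
    using card2[OF assms] by simp
  hence "real (card {(x::nat,y::nat). x + k*y \<le> A*k}) = real k * real A * (real A + 1) / 2 + (real A + 1)"
    by (simp add: field_simps)
  thus ?thesis using R1 R2 c by simp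
qed
end
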